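(* Let $q:\mathcal U\to\mathbb R^p$ be continuous, differentiable on $\mathrm{Int}(\mathcal U)$, with $Dq$ symmetric and positive definite on $\mathrm{Int}(\mathcal U)$, and suppose $\mathcal Y:=q(\mathcal U)$ is convex. Then $q(u)\in\mathrm{Int}(\mathcal Y)$ for every $u\in\mathrm{Int}(\mathcal U)$.
   Context: $\mathcal U\subset\mathbb R^p$ is a compact convex set with nonempty interior. $Dq$ denotes the Jacobian of $q$. *)

theory Defs
  imports "HOL-Analysis.Analysis"
begin

definition jacobian :: "(real^'n \<Rightarrow> real^'m) \<Rightarrow> real^'n \<Rightarrow> real^'n^'m" where
  "jacobian q u = matrix (frechet_derivative q (at u))"

definition symmetric_matrix :: "real^'n^'n \<Rightarrow> bool" where
  "symmetric_matrix A \<longleftrightarrow> transpose A = A"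

definition pos_def_matrix :: "real^'n^'n \<Rightarrow> bool" where
  "pos_def_matrix A \<longleftrightarrow> (\<forall>x. x \<noteq> 0 \<longrightarrow> x \<bullet> (A *v x) > 0)"

end

theory Submission
  imports Defs
begin

lemma support_lemma:
  fixes S :: "'a::euclidean_space set"
  assumes "convex S" "x \<in> S" "x \<notin> interior S"
  obtains c where "c \<noteq> 0" "\<And>y. y \<in> S \<Longrightarrow> c \<bullet> y \<le> c \<bullet> x"
proof (cases "interior S = {}")
  case True
  obtain a b where a0: "a \<noteq> 0" and ab: "S \<subseteq> {x. a \<bullet> x = b}"
    by (rule empty_interior_subset_hyperplane[OF assms(1) True])
  have xb: "a \<bullet> x = b" using ab assms(2) by blast
  have "a \<bullet> y \<le> a \<bullet> x" if "y \<in> S" for y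
  proof -
    have "a \<bullet> y = b" using ab that by blast
    then show ?thesis using xb by simp
  qed
  then show ?thesis by (rule that[OF a0])
next
  case False
  then have ri: "rel_interior S = interior S" by (rule rel_interior_nonempty_interior)
  have xc: "x \<in> closure S" using assms(2) closure_subset by blast
  have xr: "x \<notin> rel_interior S" using ri assms(3) by simp
  obtain a where a0: "a \<noteq> 0" and sa: "\<And>y. y \<in> closure S \<Longrightarrow> a \<bullet> x \<le> a \<bullet> y"
    and "\<And>y. y \<in> rel_interior S \<Longrightarrow> a \<bullet> x < a \<bullet> y"
    by (rule supporting_hyperplane_relative_frontier[OF assms(1) xc xr]) blast
  have na: "- a \<noteq> 0" using a0 by simp
  have "(- a) \<bullet> y \<le> (- a) \<bullet> x" if "y \<in> S" for y
  proof -
    have "y \<in> closure S" using that closure_subset by blast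
    then have "a \<bullet> x \<le> a \<bullet> y" by (rule sa)
    then show ?thesis by simp
  qed
  then show ?thesis by (rule that[OF na])
qed

theorem mainTheorem11:
  fixes U :: "(real^'p) set" and q :: "real^'p \<Rightarrow> real^'p"
  assumes "compact U" and "convex U" and "interior U \<noteq> {}"
    and "continuous_on U q"
    and "\<And>u. u \<in> interior U \<Longrightarrow> q differentiable (at u)"
    and "\<And>u. u \<in> interior U \<Longrightarrow> symmetric_matrix (jacobian q u)"
    and "\<And>u. u \<in> interior U \<Longrightarrow> pos_def_matrix (jacobian q u)"
    and "convex (q ` U)"
  shows "\<forall>u \<in> interior U. q u \<in> interior (q ` U)"
proof
  fix u assume u: "u \<in> interior U"
  show "q u \<in> interior (q ` U)"
  proof (rule ccontr)
    assume nin: "q u \<notin> interior (q ` U)"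
    have quY: "q u \<in> q ` U" using u interior_subset by blast
    obtain c where c0: "c \<noteq> 0" and sup: "\<And>y. y \<in> q ` U \<Longrightarrow> c \<bullet> y \<le> c \<bullet> q u"
      using support_lemma[OF assms(8) quY nin] by blast
    define D where "D = frechet_derivative q (at u)"
    have dq: "(q has_derivative D) (at u)"
      using assms(5)[OF u] D_def frechet_derivative_works by blast
    have lin: "linear D" using dq has_derivative_linear by blast
    have jac: "jacobian q u *v c = D c"
      unfolding jacobian_def D_def[symmetric] using lin by (simp add: matrix_works)
    have pos: "c \<bullet> D c > 0"
      using assms(7)[OF u] c0 jac unfolding pos_def_matrix_def by metis
    define f where "f t = c \<bullet> q (u + t *\<^sub>R c)" for t :: real
    have dl: "((\<lambda>t::real. u + t *\<^sub>R c) has_derivative (\<lambda>t. t *\<^sub>R c)) (at 0)"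
      by (auto intro!: derivative_eq_intros)
    have dq0: "(q has_derivative D) (at ((\<lambda>t::real. u + t *\<^sub>R c) 0))"
      using dq by simp
    have "((\<lambda>t. q (u + t *\<^sub>R c)) has_derivative (\<lambda>t. D (t *\<^sub>R c))) (at 0)"
      using diff_chain_at[OF dl dq0] by (simp add: o_def)
    then have "(f has_derivative (\<lambda>t. c \<bullet> D (t *\<^sub>R c))) (at 0)"
      unfolding f_def by (auto intro!: derivative_eq_intros)
    then have "(f has_derivative (\<lambda>t. t * (c \<bullet> D c))) (at 0)"
      using linear_scale[OF lin] by (simp add: mult.commute)
    then have "(f has_derivative (\<lambda>t. (c \<bullet> D c) * t)) (at 0)"
    proof -
      have "(\<lambda>t. t * (c \<bullet> D c)) = (\<lambda>t. (c \<bullet> D c) * t)" by (simp add: fun_eq_iff)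
      then show ?thesis using \<open>(f has_derivative (\<lambda>t. t * (c \<bullet> D c))) (at 0)\<close> by simp
    qed
    then have fd: "(f has_real_derivative (c \<bullet> D c)) (at 0)"
      by (simp add: has_field_derivative_def)
    obtain d where d: "d > 0" "\<And>h. h > 0 \<Longrightarrow> h < d \<Longrightarrow> f 0 < f (0 + h)"
      using DERIV_pos_inc_right[OF fd pos] by blast
    obtain e where e: "e > 0" "ball u e \<subseteq> U"
      using u mem_interior by blast
    define h where "h = min (d/2) (e / (2 * norm c))"
    have nc: "norm c > 0" using c0 by simp
    have h0: "h > 0 \<and> h < d" using d(1) e(1) nc unfolding h_def by simp
    have "norm (h *\<^sub>R c) \<le> e/2"
    proof -
      have "norm (h *\<^sub>R c) = h * norm c" using h0 by (simp add: abs_of_pos)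
      also have "\<dots> \<le> (e / (2 * norm c)) * norm c"
        using nc unfolding h_def by (intro mult_right_mono) simp_all
      also have "\<dots> = e/2" using nc by simp
      finally show ?thesis .
    qed
    then have "u + h *\<^sub>R c \<in> ball u e" using e(1) by (simp add: dist_norm)
    then have "u + h *\<^sub>R c \<in> U" using e(2) by blast
    then have "f h \<le> f 0" unfolding f_def using sup by simp
    moreover have "f 0 < f h" using d(2)[of h] h0 by simp
    ultimately show False by simp
  qed
qed

end
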